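(* Let $G$ be a locally compact abelian group and let $0\le f\in L^\infty(G)$ be such that $f\ast g\in L^1(G)$ for every $0\le g\in L^1(G)$. Then there exists a representative $f'$ of $f\in L^\infty(G)$ (i.e. $f'=f$ outside a locally null set) with $f'\in L^1(G)$. If moreover $f$ is bounded and continuous, then $f\in L^1(G)$.
   Context: $G$ carries a Haar measure $\lambda$ and is not assumed second countable. A set $A\subset G$ is locally Borel if $A\cap F$ is Borel for every $\sigma$-finite Borel set $F$; it is locally null if moreover $\lambda(A\cap F)=0$ for every such $F$. A function is locally Borel measurable if preimages of Borel sets are locally Borel. $L^\infty(G)$ is the space of locally Borel measurable functions $f$ for which some $\{|f|>c\}$ is locally null, modulo equality outside locally null sets (so that $L^\infty(G)=L^1(G)'$). $f\ast g(x)=\int_G f(y)g(x-y)dy$. *)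

theory Defs
  imports "HOL-Analysis.Analysis"
begin

definition lca_group :: "'a::{topological_ab_group_add, t2_space} itself \<Rightarrow> bool" where
  "lca_group _ \<longleftrightarrow> locally_compact_space (euclidean :: 'a topology)"

definition haar_measure :: "'a::{topological_ab_group_add, t2_space} measure \<Rightarrow> bool" where
  "haar_measure M \<longleftrightarrow>
     sets M = sets borel \<and>
     (\<forall>a A. A \<in> sets M \<longrightarrow> emeasure M ((\<lambda>x. a + x) ` A) = emeasure M A) \<and>
     (\<forall>K. compact K \<longrightarrow> emeasure M K < \<infinity>) \<and>
     (\<forall>A \<in> sets M. emeasure M A = (INF U\<in>{U. open U \<and> A \<subseteq> U}. emeasure M U)) \<and>
     (\<forall>U. open U \<longrightarrow> emeasure M U = (SUP K\<in>{K. compact K \<and> K \<subseteq> U}. emeasure M K)) \<and>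
     emeasure M (space M) \<noteq> 0"

definition sigma_finite_set :: "'a measure \<Rightarrow> 'a set \<Rightarrow> bool" where
  "sigma_finite_set M F \<longleftrightarrow> F \<in> sets M \<and>
     (\<exists>Fn::nat \<Rightarrow> 'a set. range Fn \<subseteq> sets M \<and> (\<forall>n. emeasure M (Fn n) < \<infinity>) \<and> F = (\<Union>n. Fn n))"

definition locally_borel :: "'a measure \<Rightarrow> 'a set \<Rightarrow> bool" where
  "locally_borel M A \<longleftrightarrow> (\<forall>F. sigma_finite_set M F \<longrightarrow> A \<inter> F \<in> sets M)"

definition locally_null :: "'a measure \<Rightarrow> 'a set \<Rightarrow> bool" where
  "locally_null M A \<longleftrightarrow> locally_borel M A \<and>
     (\<forall>F. sigma_finite_set M F \<longrightarrow> emeasure M (A \<inter> F) = 0)"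

definition locally_borel_measurable :: "'a measure \<Rightarrow> ('a \<Rightarrow> real) \<Rightarrow> bool" where
  "locally_borel_measurable M f \<longleftrightarrow> (\<forall>B \<in> sets (borel :: real measure). locally_borel M (f -` B))"

text \<open>f is a representative of an element of L-infinity(G)\<close>
definition Linfty :: "'a measure \<Rightarrow> ('a \<Rightarrow> real) \<Rightarrow> bool" where
  "Linfty M f \<longleftrightarrow> locally_borel_measurable M f \<and> (\<exists>c. locally_null M {x. \<bar>f x\<bar> > c})"

definition conv :: "'a::ab_group_add measure \<Rightarrow> ('a \<Rightarrow> real) \<Rightarrow> ('a \<Rightarrow> real) \<Rightarrow> 'a \<Rightarrow> real" where
  "conv M f g x = (\<integral>y. f y * g (x - y) \<partial>M)"

end

theory Submission
  imports Defs
begin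

lemma tg_open_translate:
  fixes S :: "'a::topological_ab_group_add set"
  assumes "open S" shows "open ((\<lambda>x. a + x) ` S)"
proof -
  have "(\<lambda>x. a + x) ` S = (\<lambda>x. x - a) -` S"
  proof (auto simp: image_iff algebra_simps)
    fix x assume "x - a \<in> S" then show "\<exists>y\<in>S. x = y + a" by (intro bexI[of _ "x - a"]) auto
  qed
  moreover have "continuous_on UNIV (\<lambda>x::'a. x - a)" by (intro continuous_intros)
  ultimately show ?thesis using assms by (simp add: continuous_on_open_vimage)
qed

lemma tg_open_neg:
  fixes S :: "'a::topological_ab_group_add set"
  assumes "open S" shows "open (uminus -` S)"
proof -
  have "continuous_on UNIV (\<lambda>x::'a. - x)" by (intro continuous_intros)
  then show ?thesis using assms by (simp add: continuous_on_open_vimage)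
qed

lemma tg_compact_translate:
  fixes S :: "'a::topological_ab_group_add set"
  assumes "compact S" shows "compact ((\<lambda>x. a + x) ` S)"
  by (rule compact_continuous_image[OF _ assms]) (intro continuous_intros)

lemma tg_compact_reflect:
  fixes S :: "'a::topological_ab_group_add set"
  assumes "compact S" shows "compact {y. x - y \<in> S}"
proof -
  have "{y. x - y \<in> S} = (\<lambda>k. x - k) ` S" by (auto simp: image_iff intro!: bexI[of _ "x - _"])
  moreover have "compact ((\<lambda>k. x - k) ` S)"
    by (rule compact_continuous_image[OF _ assms]) (intro continuous_intros)
  ultimately show ?thesis by simp
qed

lemma tg_half_nbhd:
  fixes W :: "'a::topological_ab_group_add set"
  assumes "open W" "0 \<in> W"
  obtains U where "open U" "0 \<in> U" "\<And>a b. a \<in> U \<Longrightarrow> b \<in> U \<Longrightarrow> a + b \<in> W"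
proof -
  have "continuous_on UNIV (\<lambda>p::'a\<times>'a. fst p + snd p)" by (intro continuous_intros)
  then have "open ((\<lambda>p::'a\<times>'a. fst p + snd p) -` W)" using assms by (simp add: continuous_on_open_vimage)
  moreover have "(0,0) \<in> (\<lambda>p::'a\<times>'a. fst p + snd p) -` W" using assms by simp
  ultimately obtain A B where AB: "open A" "open B" "(0,0) \<in> A \<times> B" "A \<times> B \<subseteq> (\<lambda>p::'a\<times>'a. fst p + snd p) -` W"
    by (rule open_prod_elim)
  show ?thesis
  proof (rule that[of "A \<inter> B"])
    show "open (A \<inter> B)" using AB by auto
    show "0 \<in> A \<inter> B" using AB by auto
    fix a b assume "a \<in> A \<inter> B" "b \<in> A \<inter> B"
    then show "a + b \<in> W" using AB(4) by auto
  qed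
qed

lemma tg_three_nbhd:
  fixes W :: "'a::topological_ab_group_add set"
  assumes "open W" "0 \<in> W"
  obtains U where "open U" "0 \<in> U" "\<And>a b c. a \<in> U \<Longrightarrow> b \<in> U \<Longrightarrow> c \<in> U \<Longrightarrow> a - b + c \<in> W"
proof -
  obtain U2 where U2: "open U2" "0 \<in> U2" "\<And>a b. a \<in> U2 \<Longrightarrow> b \<in> U2 \<Longrightarrow> a + b \<in> W"
    using tg_half_nbhd[OF assms] by blast
  obtain U3 where U3: "open U3" "0 \<in> U3" "\<And>a b. a \<in> U3 \<Longrightarrow> b \<in> U3 \<Longrightarrow> a + b \<in> U2"
    using tg_half_nbhd[OF U2(1,2)] by blast
  show ?thesis
  proof (rule that[of "U3 \<inter> uminus -` U3 \<inter> U2"])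
    show "open (U3 \<inter> uminus -` U3 \<inter> U2)" using U2 U3 tg_open_neg[OF U3(1)] by auto
    show "0 \<in> U3 \<inter> uminus -` U3 \<inter> U2" using U2 U3 by auto
    fix a b c assume "a \<in> U3 \<inter> uminus -` U3 \<inter> U2" "b \<in> U3 \<inter> uminus -` U3 \<inter> U2" "c \<in> U3 \<inter> uminus -` U3 \<inter> U2"
    then have "a + (- b) \<in> U2" "c \<in> U2" using U3(3)[of a "- b"] by auto
    then have "(a + (- b)) + c \<in> W" using U2(3) by blast
    then show "a - b + c \<in> W" by simp
  qed
qed

lemma fin_sf: "B \<in> sets M \<Longrightarrow> emeasure M B < \<infinity> \<Longrightarrow> sigma_finite_set M B"
  unfolding sigma_finite_set_def by (intro conjI exI[of _ "\<lambda>_. B"]) auto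

lemma meas_ind:
  fixes f :: "'a \<Rightarrow> real"
  assumes "locally_borel_measurable M f" "sigma_finite_set M B"
  shows "(\<lambda>y. f y * indicator B y) \<in> borel_measurable M"
proof (rule measurableI)
  have B: "B \<in> sets M" using assms(2) by (simp add: sigma_finite_set_def)
  fix A :: "real set" assume A: "A \<in> sets borel"
  have fA: "f -` A \<inter> B \<in> sets M"
    using assms A unfolding locally_borel_measurable_def locally_borel_def by blast
  have Bs: "B \<subseteq> space M" using B sets.sets_into_space by blast
  show "(\<lambda>y. f y * indicator B y) -` A \<inter> space M \<in> sets M"
  proof (cases "0 \<in> A")
    case True
    then have "(\<lambda>y. f y * indicator B y) -` A \<inter> space M = (f -` A \<inter> B) \<union> (space M - B)"
      using Bs by (auto simp: indicator_def)
    then show ?thesis using fA B by auto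
  next
    case False
    then have "(\<lambda>y. f y * indicator B y) -` A \<inter> space M = f -` A \<inter> B"
      using Bs by (auto simp: indicator_def of_bool_def split: if_splits)
    then show ?thesis using fA by auto
  qed
qed auto

lemma ae_bound:
  fixes f :: "'a \<Rightarrow> real"
  assumes "Linfty M f" "sigma_finite_set M B"
  obtains c where "AE y in M. y \<in> B \<longrightarrow> \<bar>f y\<bar> \<le> c"
proof -
  obtain c where c: "locally_null M {x. \<bar>f x\<bar> > c}" using assms(1) by (auto simp: Linfty_def)
  then have "{x. \<bar>f x\<bar> > c} \<inter> B \<in> null_sets M"
    using assms(2) unfolding locally_null_def locally_borel_def by auto
  then have "AE y in M. y \<in> B \<longrightarrow> \<bar>f y\<bar> \<le> c"
    by (rule AE_I') auto
  then show ?thesis by (rule that)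
qed

lemma ae_nonneg:
  fixes f :: "'a \<Rightarrow> real"
  assumes "locally_null M {x. f x < 0}" "sigma_finite_set M B"
  shows "AE y in M. y \<in> B \<longrightarrow> 0 \<le> f y"
proof -
  have "{x. f x < 0} \<inter> B \<in> null_sets M"
    using assms unfolding locally_null_def locally_borel_def by auto
  then show ?thesis by (rule AE_I') auto
qed

lemma int_ind:
  fixes f :: "'a \<Rightarrow> real"
  assumes "Linfty M f" "B \<in> sets M" "emeasure M B < \<infinity>"
  shows "integrable M (\<lambda>y. f y * indicator B y)"
proof -
  have sf: "sigma_finite_set M B" using fin_sf[OF assms(2,3)] .
  obtain c where c: "AE y in M. y \<in> B \<longrightarrow> \<bar>f y\<bar> \<le> c" using ae_bound[OF assms(1) sf] by blast
  have "integrable M (\<lambda>y. \<bar>c\<bar> * indicator B y :: real)"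
    using assms(2,3) by (intro integrable_mult_right) auto
  moreover have "(\<lambda>y. f y * indicator B y) \<in> borel_measurable M"
    using assms(1) sf by (intro meas_ind) (auto simp: Linfty_def)
  moreover have "AE y in M. norm (f y * indicator B y) \<le> norm (\<bar>c\<bar> * indicator B y :: real)"
    using c by eventually_elim (auto simp: indicator_def)
  ultimately show ?thesis by (rule Bochner_Integration.integrable_bound)
qed

definition fint :: "'a measure \<Rightarrow> ('a \<Rightarrow> real) \<Rightarrow> 'a set \<Rightarrow> real" where
  "fint M f B = (\<integral>y. f y * indicator B y \<partial>M)"

lemma fint_nonneg:
  assumes "locally_null M {x. f x < 0}" "B \<in> sets M" "emeasure M B < \<infinity>"
  shows "0 \<le> fint M f B"
proof -
  have "AE y in M. 0 \<le> f y * indicator B y"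
    using ae_nonneg[OF assms(1) fin_sf[OF assms(2,3)]] by eventually_elim (auto simp: indicator_def)
  then show ?thesis unfolding fint_def by (rule integral_nonneg_AE)
qed

lemma fint_mono:
  assumes "Linfty M f" "locally_null M {x. f x < 0}" "B' \<in> sets M" "emeasure M B' < \<infinity>"
    "B \<in> sets M" "B \<subseteq> B'"
  shows "fint M f B \<le> fint M f B'"
proof -
  have "emeasure M B < \<infinity>" using assms emeasure_mono[of B B' M] by auto
  have "AE y in M. f y * indicator B y \<le> f y * indicator B' y"
    using ae_nonneg[OF assms(2) fin_sf[OF assms(3,4)]]
    by eventually_elim (use assms(6) in \<open>auto simp: indicator_def\<close>)
  then show ?thesis
    unfolding fint_def
    by (rule integral_mono_AE[rotated 2]) (use assms \<open>emeasure M B < \<infinity>\<close> in \<open>auto intro: int_ind\<close>)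
qed

lemma fint_cover:
  assumes "Linfty M f" "locally_null M {x. f x < 0}" "finite J"
    "\<And>i. i \<in> J \<Longrightarrow> A i \<in> sets M" "\<And>i. i \<in> J \<Longrightarrow> emeasure M (A i) < \<infinity>"
    "L \<in> sets M" "emeasure M L < \<infinity>" "L \<subseteq> (\<Union>i\<in>J. A i)"
  shows "fint M f L \<le> (\<Sum>i\<in>J. fint M f (A i))"
proof -
  have ae: "AE y in M. \<forall>i\<in>J. y \<in> A i \<longrightarrow> 0 \<le> f y"
    using assms by (intro AE_finite_allI ae_nonneg fin_sf) auto
  have i1: "integrable M (\<lambda>y. f y * indicator L y)" using assms by (intro int_ind) auto
  have i2: "integrable M (\<lambda>y. \<Sum>i\<in>J. f y * indicator (A i) y)"
    by (rule Bochner_Integration.integrable_sum) (use assms in \<open>auto intro: int_ind\<close>)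
  have "fint M f L \<le> (\<integral>y. (\<Sum>i\<in>J. f y * indicator (A i) y) \<partial>M)"
    unfolding fint_def
  proof (rule integral_mono_AE[OF i1 i2])
    show "AE x in M. f x * indicator L x \<le> (\<Sum>i\<in>J. f x * indicator (A i) x)"
      using ae
    proof eventually_elim
      case (elim x)
      have nn: "\<And>i. i \<in> J \<Longrightarrow> 0 \<le> f x * indicator (A i) x" using elim by (auto simp: indicator_def)
      show ?case
      proof (cases "x \<in> L")
        case True
        then obtain i where i: "i \<in> J" "x \<in> A i" using assms(8) by auto
        have "f x * indicator L x = f x * indicator (A i) x" using True i by simp
        also have "\<dots> \<le> (\<Sum>i\<in>J. f x * indicator (A i) x)"
          using i nn assms(3) by (intro member_le_sum) auto
        finally show ?thesis .
      next
        case False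
        then show ?thesis using nn by (simp add: sum_nonneg)
      qed
    qed
  qed
  also have "\<dots> = (\<Sum>i\<in>J. fint M f (A i))"
    unfolding fint_def by (rule Bochner_Integration.integral_sum) (use assms in \<open>auto intro: int_ind\<close>)
  finally show ?thesis .
qed

lemma fint_add:
  assumes "Linfty M f" "B \<in> sets M" "emeasure M B < \<infinity>" "B' \<in> sets M" "emeasure M B' < \<infinity>"
    "B \<inter> B' = {}"
  shows "fint M f (B \<union> B') = fint M f B + fint M f B'"
proof -
  have "fint M f (B \<union> B') = (\<integral>y. f y * indicator B y + f y * indicator B' y \<partial>M)"
    unfolding fint_def using assms(6)
    by (intro Bochner_Integration.integral_cong) (auto simp: indicator_def)
  also have "\<dots> = fint M f B + fint M f B'"
    unfolding fint_def using assms by (intro Bochner_Integration.integral_add int_ind) auto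
  finally show ?thesis .
qed

lemma haarD:
  assumes "haar_measure M"
  shows haar_sets: "sets M = sets borel"
    and haar_transl: "\<And>a A. A \<in> sets M \<Longrightarrow> emeasure M ((\<lambda>x. a + x) ` A) = emeasure M A"
    and haar_compact_fin: "\<And>K. compact K \<Longrightarrow> emeasure M K < \<infinity>"
    and haar_outer: "\<And>A. A \<in> sets M \<Longrightarrow> emeasure M A = (INF U\<in>{U. open U \<and> A \<subseteq> U}. emeasure M U)"
    and haar_inner: "\<And>U. open U \<Longrightarrow> emeasure M U = (SUP K\<in>{K. compact K \<and> K \<subseteq> U}. emeasure M K)"
    and haar_nonzero: "emeasure M (space M) \<noteq> 0"
  using assms unfolding haar_measure_def by (elim conjE; simp)+

lemma haar_space: "haar_measure M \<Longrightarrow> space M = UNIV"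
  using sets_eq_imp_space_eq[of M borel] haar_sets[of M] by simp

lemma haar_open: "haar_measure M \<Longrightarrow> open U \<Longrightarrow> U \<in> sets M"
  using haar_sets[of M] by (simp add: borel_open)

lemma haar_compact: "haar_measure M \<Longrightarrow> compact K \<Longrightarrow> K \<in> sets M"
  using haar_sets[of M] by (simp add: borel_closed compact_imp_closed)

lemma haar_open_pos:
  fixes M :: "'a::{topological_ab_group_add, t2_space} measure"
  assumes H: "haar_measure M" and U: "open U" "U \<noteq> {}"
  shows "emeasure M U > 0"
proof (rule ccontr)
  assume "\<not> emeasure M U > 0"
  then have U0: "emeasure M U = 0" by (simp add: not_gr_zero)
  obtain u0 where u0: "u0 \<in> U" using U by auto
  have tr0: "emeasure M ((\<lambda>x. a + x) ` U) = 0" for a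
    using haar_transl[OF H haar_open[OF H U(1)]] U0 by simp
  have K0: "emeasure M K = 0" if K: "compact K" for K
  proof -
    have "K \<subseteq> (\<Union>k\<in>K. (\<lambda>x. (k - u0) + x) ` U)"
    proof
      fix k assume "k \<in> K" then show "k \<in> (\<Union>k\<in>K. (\<lambda>x. (k - u0) + x) ` U)"
        using u0 by (auto intro!: bexI[of _ k] image_eqI[of _ _ u0])
    qed
    then obtain F where F: "F \<subseteq> K" "finite F" "K \<subseteq> (\<Union>k\<in>F. (\<lambda>x. (k - u0) + x) ` U)"
      using compactE_image[OF K, of K "\<lambda>k. (\<lambda>x. (k - u0) + x) ` U"] tg_open_translate[OF U(1)] by metis
    have "emeasure M K \<le> emeasure M (\<Union>k\<in>F. (\<lambda>x. (k - u0) + x) ` U)"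
      using F H by (intro emeasure_mono sets.finite_UN) (auto intro: haar_open tg_open_translate U)
    also have "\<dots> \<le> (\<Sum>k\<in>F. emeasure M ((\<lambda>x. (k - u0) + x) ` U))"
      using F H by (intro emeasure_subadditive_finite) (auto intro: haar_open tg_open_translate U)
    also have "\<dots> = 0" using tr0 by simp
    finally show ?thesis by simp
  qed
  have "emeasure M UNIV = (SUP K\<in>{K. compact K \<and> K \<subseteq> UNIV}. emeasure M K)"
    using haar_inner[OF H, of UNIV] by simp
  also have "\<dots> \<le> 0"
    by (rule SUP_least) (auto simp: K0)
  finally show False using haar_nonzero[OF H] haar_space[OF H] by simp
qed

lemma meas_less_aux: "emeasure M A < emeasure M B + ennreal e \<Longrightarrow> emeasure M B < \<infinity> \<Longrightarrow> e \<ge> 0 \<Longrightarrow> measure M A < measure M B + e"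
  by (smt (verit) enn2real_ennreal enn2real_le enn2real_plus
    ennreal_add_less_top infinity_ennreal_def less_top_ennreal
    linorder_not_less measure_eq_emeasure_eq_ennreal order_le_less_trans
    order_less_imp_le)

lemma fin_aux: "(w::ennreal) < b + ennreal e \<Longrightarrow> b < \<infinity> \<Longrightarrow> w < \<infinity>"
  using ennreal_add_less_top[of b "ennreal e"] by (simp add: order.strict_trans)

lemma haar_outer_approx:
  fixes M :: "'a::{topological_ab_group_add, t2_space} measure"
  assumes H: "haar_measure M" and A: "A \<in> sets M" "emeasure M A < \<infinity>" and e: "e > 0"
  obtains W where "open W" "A \<subseteq> W" "emeasure M W < emeasure M A + ennreal e"
proof -
  have lt: "emeasure M A < emeasure M A + ennreal e"
    using A(2) e by auto
  have "(INF U\<in>{U. open U \<and> A \<subseteq> U}. emeasure M U) = emeasure M A"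
    by (rule haar_outer[OF H A(1), symmetric])
  also note lt
  finally obtain W where "W \<in> {U. open U \<and> A \<subseteq> U}" "emeasure M W < emeasure M A + ennreal e"
    unfolding INF_less_iff by blast
  then show ?thesis using that by blast
qed

lemma haar_inner_approx:
  fixes M :: "'a::{topological_ab_group_add, t2_space} measure"
  assumes H: "haar_measure M" and W: "open W" "emeasure M W < \<infinity>" and e: "e > 0"
  obtains K where "compact K" "K \<subseteq> W" "measure M W < measure M K + e"
proof (cases "measure M W = 0")
  case True
  then show ?thesis using that[of "{}"] e by auto
next
  case False
  then have pos: "measure M W > 0" using measure_nonneg[of M W] by linarith
  have "ennreal (max 0 (measure M W - e)) < ennreal (measure M W)"
    using pos e by (auto simp: ennreal_less_iff)
  also have "\<dots> = emeasure M W" using W by (simp add: emeasure_eq_ennreal_measure)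
  also have "\<dots> = (SUP K\<in>{K. compact K \<and> K \<subseteq> W}. emeasure M K)" using haar_inner[OF H W(1)] .
  finally obtain K where K: "K \<in> {K. compact K \<and> K \<subseteq> W}" "ennreal (max 0 (measure M W - e)) < emeasure M K"
    unfolding less_SUP_iff by blast
  have Kc: "compact K" "K \<subseteq> W" using K(1) by auto
  have "emeasure M K = ennreal (measure M K)"
    using haar_compact_fin[OF H Kc(1)] by (simp add: emeasure_eq_ennreal_measure)
  with K(2) have "max 0 (measure M W - e) < measure M K"
    by (simp add: ennreal_less_iff)
  then show ?thesis using that Kc by force
qed

lemma haar_null_from_compacts:
  fixes M :: "'a::{topological_ab_group_add, t2_space} measure"
  assumes H: "haar_measure M" and B: "B \<in> sets M" "emeasure M B < \<infinity>"
    and K0: "\<And>K. compact K \<Longrightarrow> K \<subseteq> B \<Longrightarrow> emeasure M K = 0"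
  shows "emeasure M B = 0"
proof -
  have "measure M B \<le> 3 * e" if e: "e > 0" for e
  proof -
    obtain W where W: "open W" "B \<subseteq> W" "emeasure M W < emeasure M B + ennreal e"
      using haar_outer_approx[OF H B e] by blast
    have Ws: "W \<in> sets M" using haar_open[OF H W(1)] .
    have Wfin: "emeasure M W < \<infinity>" using fin_aux[OF W(3) B(2)] .
    have mW: "measure M W < measure M B + e"
      using meas_less_aux[OF W(3) B(2)] e by simp
    have WBs: "W - B \<in> sets M" using Ws B by auto
    have "emeasure M (W - B) \<le> emeasure M W" using Ws by (intro emeasure_mono) auto
    then have WBfin: "emeasure M (W - B) < \<infinity>" using Wfin by (auto intro: le_less_trans)
    obtain V where V: "open V" "W - B \<subseteq> V" "emeasure M V < emeasure M (W - B) + ennreal e"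
      using haar_outer_approx[OF H WBs WBfin e] by blast
    have Vs: "V \<in> sets M" using haar_open[OF H V(1)] .
    have Vfin: "emeasure M V < \<infinity>" using fin_aux[OF V(3) WBfin] .
    have mWB: "measure M (W - B) = measure M W - measure M B"
      using measure_Diff[of M W B] Wfin Ws B W(2) by (simp add: less_top)
    have mV: "measure M V < measure M W - measure M B + e"
      using meas_less_aux[OF V(3) WBfin] e mWB by simp
    obtain K where K: "compact K" "K \<subseteq> W" "measure M W < measure M K + e"
      using haar_inner_approx[OF H W(1) Wfin e] by blast
    have Ks: "K \<in> sets M" using haar_compact[OF H K(1)] .
    have KV: "compact (K - V)" using K(1) V(1) by (rule compact_diff)
    have KVB: "K - V \<subseteq> B" using K(2) V(2) by auto
    have KV0: "emeasure M (K - V) = 0" using K0[OF KV KVB] .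
    have cover: "B \<subseteq> (K - V) \<union> (W - K) \<union> V" using W(2) by auto
    have KVs: "K - V \<in> sets M" using Ks Vs by blast
    have WKs: "W - K \<in> sets M" using Ws Ks by blast
    have fm1: "K - V \<in> fmeasurable M" using fmeasurableI_null_sets[OF null_setsI[OF KV0 KVs]] .
    have "emeasure M (W - K) \<le> emeasure M W" using Ws by (intro emeasure_mono) auto
    then have fm2: "W - K \<in> fmeasurable M"
      using WKs Wfin by (intro fmeasurableI) (auto intro: le_less_trans)
    have fm3: "V \<in> fmeasurable M" using Vs Vfin by (intro fmeasurableI)
    have fmU: "(K - V) \<union> (W - K) \<union> V \<in> fmeasurable M"
      using fm1 fm2 fm3 by (intro fmeasurable.Un)
    have a1: "measure M B \<le> measure M ((K - V) \<union> (W - K) \<union> V)"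
      by (rule measure_mono_fmeasurable[OF cover B(1) fmU])
    have a2: "measure M ((K - V) \<union> (W - K) \<union> V) \<le> measure M ((K - V) \<union> (W - K)) + measure M V"
      by (rule measure_Un_le) (use KVs WKs Vs in blast)+
    have a3: "measure M ((K - V) \<union> (W - K)) \<le> measure M (K - V) + measure M (W - K)"
      by (rule measure_Un_le[OF KVs WKs])
    have a4: "measure M (K - V) = 0" using KV0 by (simp add: measure_def)
    have a5: "measure M (W - K) = measure M W - measure M K"
      using measure_Diff[of M W K] Wfin Ws Ks K(2) by (simp add: less_top)
    have "measure M B \<le> measure M W - measure M K + measure M V" using a1 a2 a3 a4 a5 by linarith
    then show ?thesis using mW mV K(3) by linarith
  qed
  note th = this
  have "measure M B \<le> 0 + e" if "e > 0" for e
    using th[of "e / 3"] that by simp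
  then have "measure M B \<le> 0" by (rule field_le_epsilon)
  then have "measure M B = 0" using measure_nonneg[of M B] by linarith
  moreover have "emeasure M B = ennreal (measure M B)"
    by (rule emeasure_eq_ennreal_measure) (use B(2) in simp)
  ultimately show ?thesis by simp
qed

lemma part1:
  fixes M :: "'a::{topological_ab_group_add, t2_space} measure" and f :: "'a \<Rightarrow> real"
  assumes lca: "lca_group TYPE('a)" and H: "haar_measure M" and Lf: "Linfty M f"
    and nn: "locally_null M {x. f x < 0}"
    and hyp: "\<And>g. integrable M g \<Longrightarrow> (AE x in M. 0 \<le> g x) \<Longrightarrow> integrable M (conv M f g)"
  shows "\<exists>S. sigma_finite_set M S \<and> locally_null M {x. f x * indicator S x \<noteq> f x}
     \<and> integrable M (\<lambda>x. f x * indicator S x)"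
proof -
  have spM: "space M = UNIV" using haar_space[OF H] .
  have "\<exists>U K. open U \<and> compact K \<and> (0::'a) \<in> U \<and> U \<subseteq> K"
    using lca unfolding lca_group_def locally_compact_space_def by auto
  then obtain U0 K0 where U0: "open U0" "compact K0" "(0::'a) \<in> U0" "U0 \<subseteq> K0" by blast
  obtain U where U: "open U" "0 \<in> U" "\<And>a b c. a \<in> U \<Longrightarrow> b \<in> U \<Longrightarrow> c \<in> U \<Longrightarrow> a - b + c \<in> U0"
    using tg_three_nbhd[OF U0(1,3)] by blast
  define D where "D = {a - b | a b. a \<in> U \<and> b \<in> U}"
  have Deq: "D = (\<Union>b\<in>U. (\<lambda>x. (- b) + x) ` U)" unfolding D_def by force
  have D_open: "open D" unfolding Deq by (rule open_UN) (use tg_open_translate[OF U(1)] in blast)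
  have UD: "U \<subseteq> D" unfolding D_def using U(2) by force
  have DK0: "D \<subseteq> K0" unfolding D_def using U(2,3) U0(4) by force
  have UK0: "U \<subseteq> K0" using UD DK0 by blast
  define T where "T a = (\<lambda>z. a + z) ` U" for a
  define TD where "TD a = (\<lambda>z. a + z) ` D" for a
  define Kx where "Kx x = {y. x - y \<in> K0}" for x
  have key: "TD p \<subseteq> Kx x" if xT: "x \<in> T p" for p x
  proof
    fix y assume "y \<in> TD p"
    then obtain a b where ab: "a \<in> U" "b \<in> U" "y = p + (a - b)" unfolding TD_def D_def by auto
    obtain u where u: "u \<in> U" "x = p + u" using xT unfolding T_def by auto
    have "x - y = u - a + b" using ab u by (simp add: algebra_simps)
    then show "y \<in> Kx x" unfolding Kx_def using U(3)[OF u(1) ab(1,2)] U0(4) by auto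
  qed
  have Kx_c: "compact (Kx x)" for x unfolding Kx_def by (rule tg_compact_reflect[OF U0(2)])
  have Kx_s: "Kx x \<in> sets M" for x using haar_compact[OF H Kx_c] .
  have Kx_f: "emeasure M (Kx x) < \<infinity>" for x using haar_compact_fin[OF H Kx_c] .
  have K0_s: "K0 \<in> sets M" using haar_compact[OF H U0(2)] .
  have K0_f: "emeasure M K0 < \<infinity>" using haar_compact_fin[OF H U0(2)] .
  have TK_c: "compact ((\<lambda>z. p + z) ` K0)" for p by (rule tg_compact_translate[OF U0(2)])
  have TD_s: "TD p \<in> sets M" for p unfolding TD_def by (rule haar_open[OF H tg_open_translate[OF D_open]])
  have T_s: "T p \<in> sets M" for p unfolding T_def by (rule haar_open[OF H tg_open_translate[OF U(1)]])
  have TD_f: "emeasure M (TD p) < \<infinity>" for p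
  proof -
    have "emeasure M (TD p) \<le> emeasure M ((\<lambda>z. p + z) ` K0)"
      unfolding TD_def using DK0 haar_compact[OF H TK_c] by (intro emeasure_mono) auto
    then show ?thesis using haar_compact_fin[OF H TK_c] by (auto intro: le_less_trans)
  qed
  have U_s: "U \<in> sets M" using haar_open[OF H U(1)] .
  have U_f: "emeasure M U < \<infinity>"
  proof -
    have "emeasure M U \<le> emeasure M K0" using UK0 K0_s by (intro emeasure_mono)
    then show ?thesis using K0_f by (auto intro: le_less_trans)
  qed
  have mT: "emeasure M (T p) = emeasure M U" for p unfolding T_def by (rule haar_transl[OF H U_s])
  have T_f: "emeasure M (T p) < \<infinity>" for p using mT U_f by simp
  have mTr: "measure M (T p) = measure M U" for p unfolding measure_def using mT by simp
  define g :: "'a \<Rightarrow> real" where "g = indicator K0"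
  have gi: "integrable M g" unfolding g_def using K0_s K0_f by (rule integrable_real_indicator)
  have gnn: "AE x in M. 0 \<le> g x" unfolding g_def by simp
  define c where "c = conv M f g"
  have cint: "integrable M c" unfolding c_def by (rule hyp[OF gi gnn])
  have c_eq: "c x = fint M f (Kx x)" for x
    unfolding c_def conv_def fint_def g_def Kx_def by (simp add: indicator_def)
  have c_nn: "0 \<le> c x" for x unfolding c_eq by (rule fint_nonneg[OF nn Kx_s Kx_f])
  have bound_T: "fint M f (TD p) \<le> c x" if "x \<in> T p" for p x
    unfolding c_eq by (rule fint_mono[OF Lf nn Kx_s Kx_f TD_s key[OF that]])
  define mu where "mu = measure M U"
  have mu_pos: "mu > 0"
  proof -
    have "emeasure M U > 0" using haar_open_pos[OF H U(1)] U(2) by blast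
    then show ?thesis unfolding mu_def using U_f
      by (simp add: measure_def enn2real_positive_iff less_top)
  qed
  define Fam where "Fam = {X. \<forall>a\<in>X. \<forall>b\<in>X. a \<noteq> b \<longrightarrow> T a \<inter> T b = {}}"
  have "\<forall>C\<in>chains Fam. \<Union>C \<in> Fam"
  proof
    fix C assume C: "C \<in> chains Fam"
    show "\<Union>C \<in> Fam" unfolding Fam_def
    proof (intro CollectI ballI impI)
      fix a b assume a: "a \<in> \<Union>C" and b: "b \<in> \<Union>C" and ab: "a \<noteq> b"
      obtain X1 where X1: "X1 \<in> C" "a \<in> X1" using a by blast
      obtain X2 where X2: "X2 \<in> C" "b \<in> X2" using b by blast
      have "X1 \<subseteq> X2 \<or> X2 \<subseteq> X1" using C X1 X2 unfolding chains_def chain_subset_def by blast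
      moreover have "X1 \<in> Fam" "X2 \<in> Fam" using C X1 X2 unfolding chains_def by auto
      ultimately show "T a \<inter> T b = {}" using X1 X2 ab unfolding Fam_def by blast
    qed
  qed
  then obtain X where X: "X \<in> Fam" "\<And>Y. Y \<in> Fam \<Longrightarrow> X \<subseteq> Y \<Longrightarrow> Y = X"
    using Zorn_Lemma[of Fam] by blast
  have Xdisj: "T a \<inter> T b = {}" if "a \<in> X" "b \<in> X" "a \<noteq> b" for a b
    using X(1) that unfolding Fam_def by blast
  have cover: "\<exists>i\<in>X. y \<in> TD i" for y
  proof (rule ccontr)
    assume nc: "\<not> (\<exists>i\<in>X. y \<in> TD i)"
    have yX: "y \<notin> X"
    proof
      assume "y \<in> X"
      moreover have "y \<in> TD y" unfolding TD_def using UD U(2) by force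
      ultimately show False using nc by blast
    qed
    have disj: "T y \<inter> T i = {}" if "i \<in> X" for i
    proof (rule ccontr)
      assume "T y \<inter> T i \<noteq> {}"
      then obtain u u' where uu: "u \<in> U" "u' \<in> U" "y + u = i + u'" unfolding T_def by auto
      then have "y = i + (u' - u)" by (simp add: algebra_simps)
      then have "y \<in> TD i" unfolding TD_def D_def using uu by blast
      then show False using nc that by blast
    qed
    have "insert y X \<in> Fam"
      unfolding Fam_def using Xdisj disj by (auto simp: Int_commute)
    then have "insert y X = X" using X(2) by blast
    then show False using yX by blast
  qed
  have sumb: "(\<Sum>i\<in>J. fint M f (TD i)) * mu \<le> integral\<^sup>L M c" if J: "finite J" "J \<subseteq> X" for J
  proof -
    have ci: "integrable M (\<lambda>x. c x * indicator (T i) x)" for i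
      by (rule integrable_real_mult_indicator[OF T_s cint])
    have step1: "fint M f (TD i) * mu = (\<integral>x. fint M f (TD i) * indicator (T i) x \<partial>M)" for i
      using T_s[of i] T_f[of i] spM by (simp add: mu_def mTr)
    have step2: "(\<integral>x. fint M f (TD i) * indicator (T i) x \<partial>M) \<le> (\<integral>x. c x * indicator (T i) x \<partial>M)" for i
    proof (rule integral_mono)
      show "integrable M (\<lambda>x. fint M f (TD i) * indicator (T i) x)"
        using T_s[of i] T_f[of i] by (intro integrable_mult_right integrable_real_indicator)
      show "integrable M (\<lambda>x. c x * indicator (T i) x)" by (rule ci)
      fix x show "fint M f (TD i) * indicator (T i) x \<le> c x * indicator (T i) x"
        using bound_T[of x i] by (auto simp: indicator_def)
    qed
    have "(\<Sum>i\<in>J. fint M f (TD i)) * mu = (\<Sum>i\<in>J. fint M f (TD i) * mu)"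
      by (simp add: sum_distrib_right)
    also have "\<dots> \<le> (\<Sum>i\<in>J. (\<integral>x. c x * indicator (T i) x \<partial>M))"
    proof (rule sum_mono)
      fix i show "fint M f (TD i) * mu \<le> (\<integral>x. c x * indicator (T i) x \<partial>M)"
        unfolding step1[of i] by (rule step2)
    qed
    also have "\<dots> = (\<integral>x. (\<Sum>i\<in>J. c x * indicator (T i) x) \<partial>M)"
      by (rule Bochner_Integration.integral_sum[symmetric]) (rule ci)
    also have "\<dots> \<le> integral\<^sup>L M c"
    proof (rule integral_mono)
      show "integrable M (\<lambda>x. \<Sum>i\<in>J. c x * indicator (T i) x)"
        by (rule Bochner_Integration.integrable_sum) (rule ci)
      show "integrable M c" by (rule cint)
      fix x
      have dj: "disjoint_family_on T J"
        unfolding disjoint_family_on_def using Xdisj J(2) by blast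
      have "(\<Sum>i\<in>J. indicator (T i) x) = (indicator (\<Union>(T ` J)) x :: real)"
        by (rule indicator_UN_disjoint[OF J(1) dj, symmetric])
      then have "(\<Sum>i\<in>J. indicator (T i) x) \<le> (1::real)" by (simp add: indicator_def)
      then have "c x * (\<Sum>i\<in>J. indicator (T i) x) \<le> c x * 1"
        using c_nn[of x] by (intro mult_left_mono) auto
      then show "(\<Sum>i\<in>J. c x * indicator (T i) x) \<le> c x" by (simp add: sum_distrib_left)
    qed
    finally show ?thesis .
  qed
  define Cb where "Cb = integral\<^sup>L M c / mu"
  have sumC: "(\<Sum>i\<in>J. fint M f (TD i)) \<le> Cb" if "finite J" "J \<subseteq> X" for J
    unfolding Cb_def using sumb[OF that] mu_pos by (simp add: pos_le_divide_eq)
  have LC: "fint M f L \<le> Cb" if L: "compact L" for L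
  proof -
    have "L \<subseteq> (\<Union>i\<in>X. TD i)" using cover by blast
    then obtain J where J: "J \<subseteq> X" "finite J" "L \<subseteq> (\<Union>i\<in>J. TD i)"
      using compactE_image[OF L, of X TD] tg_open_translate[OF D_open] unfolding TD_def by metis
    have "fint M f L \<le> (\<Sum>i\<in>J. fint M f (TD i))"
      by (rule fint_cover[OF Lf nn J(2) TD_s TD_f haar_compact[OF H L] haar_compact_fin[OF H L] J(3)])
    also have "\<dots> \<le> Cb" by (rule sumC[OF J(2,1)])
    finally show ?thesis .
  qed
  define V where "V = fint M f ` {L. compact L}"
  define s where "s = Sup V"
  have Vne: "V \<noteq> {}" unfolding V_def by (auto intro!: exI[of _ "{}"])
  have Vbdd: "bdd_above V" unfolding V_def using LC by (intro bdd_aboveI[of _ Cb]) auto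
  have le_s: "fint M f L \<le> s" if "compact L" for L
    unfolding s_def using that Vbdd by (intro cSup_upper) (auto simp: V_def)
  have "\<exists>L. compact L \<and> s - 1 / real (Suc n) < fint M f L" for n
  proof -
    have "s - 1 / real (Suc n) < Sup V" unfolding s_def by simp
    then obtain v where "v \<in> V" "s - 1 / real (Suc n) < v" using less_cSupE[OF _ Vne] by blast
    then show ?thesis unfolding V_def by auto
  qed
  then obtain Lq where Lq: "\<And>n. compact (Lq n)" "\<And>n. s - 1 / real (Suc n) < fint M f (Lq n)"
    by metis
  define Ln where "Ln n = (\<Union>m\<le>n. Lq m)" for n
  have Ln_c: "compact (Ln n)" for n unfolding Ln_def using Lq(1) by (intro compact_UN) auto
  have Ln_s: "Ln n \<in> sets M" for n using haar_compact[OF H Ln_c] .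
  have Ln_f: "emeasure M (Ln n) < \<infinity>" for n using haar_compact_fin[OF H Ln_c] .
  have Ln_mono: "Ln n \<subseteq> Ln m" if "n \<le> m" for n m unfolding Ln_def using that by (auto intro: le_trans)
  have Ln_big: "s - 1 / real (Suc n) < fint M f (Ln n)" for n
  proof -
    have "fint M f (Lq n) \<le> fint M f (Ln n)"
      by (rule fint_mono[OF Lf nn Ln_s Ln_f haar_compact[OF H Lq(1)]]) (auto simp: Ln_def)
    then show ?thesis using Lq(2)[of n] by linarith
  qed
  define S where "S = (\<Union>n. Ln n)"
  have S_s: "S \<in> sets M" unfolding S_def using Ln_s by auto
  have S_sf: "sigma_finite_set M S"
    unfolding sigma_finite_set_def
  proof (intro conjI exI[of _ Ln])
    show "S \<in> sets M" by (rule S_s)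
    show "range Ln \<subseteq> sets M" using Ln_s by blast
    show "\<forall>n. emeasure M (Ln n) < \<infinity>" using Ln_f by blast
    show "S = (\<Union>n. Ln n)" by (rule S_def)
  qed
  have zeroK: "fint M f K = 0" if K: "compact K" "K \<inter> S = {}" for K
  proof -
    have Ks: "K \<in> sets M" using haar_compact[OF H K(1)] .
    have Kf: "emeasure M K < \<infinity>" using haar_compact_fin[OF H K(1)] .
    have small: "fint M f K < 1 / real (Suc n)" for n
    proof -
      have dj: "Ln n \<inter> K = {}" using K(2) unfolding S_def by auto
      have "fint M f (Ln n \<union> K) = fint M f (Ln n) + fint M f K"
        by (rule fint_add[OF Lf Ln_s Ln_f Ks Kf dj])
      moreover have "fint M f (Ln n \<union> K) \<le> s" by (rule le_s[OF compact_Un[OF Ln_c K(1)]])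
      ultimately show ?thesis using Ln_big[of n] by linarith
    qed
    have "fint M f K \<le> 0"
    proof (rule ccontr)
      assume "\<not> fint M f K \<le> 0"
      then have "0 < fint M f K" by simp
      then obtain n where "inverse (real (Suc n)) < fint M f K" using reals_Archimedean by blast
      then show False using small[of n] by (simp add: inverse_eq_divide)
    qed
    then show ?thesis using fint_nonneg[OF nn Ks Kf] by linarith
  qed
  have nullK: "emeasure M K = 0" if K: "compact K" "K \<inter> S = {}" "K \<subseteq> {x. f x \<noteq> 0}" for K
  proof -
    have Ks: "K \<in> sets M" using haar_compact[OF H K(1)] .
    have Kf: "emeasure M K < \<infinity>" using haar_compact_fin[OF H K(1)] .
    have ii: "integrable M (\<lambda>y. f y * indicator K y)" by (rule int_ind[OF Lf Ks Kf])
    have ann: "AE y in M. 0 \<le> f y * indicator K y"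
      using ae_nonneg[OF nn fin_sf[OF Ks Kf]] by eventually_elim (auto simp: indicator_def)
    have "AE y in M. f y * indicator K y = 0"
      using integral_nonneg_eq_0_iff_AE[OF ii ann] zeroK[OF K(1,2)] unfolding fint_def by simp
    moreover have eqK: "{x\<in>space M. \<not> f x * indicator K x = 0} = K" using K(3) spM by (auto simp: indicator_def)
    ultimately show ?thesis using AE_iff_measurable[OF Ks eqK] by simp
  qed
  define f' where "f' x = f x * indicator S x" for x
  have f'_meas: "f' \<in> borel_measurable M"
    unfolding f'_def by (rule meas_ind[OF _ S_sf]) (use Lf in \<open>simp add: Linfty_def\<close>)
  have f'_nn: "AE x in M. 0 \<le> f' x"
    using ae_nonneg[OF nn S_sf] unfolding f'_def by eventually_elim (auto simp: indicator_def)
  have Ln_meas: "(\<lambda>x. f x * indicator (Ln n) x) \<in> borel_measurable M" for n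
    by (rule meas_ind[OF _ fin_sf[OF Ln_s Ln_f]]) (use Lf in \<open>simp add: Linfty_def\<close>)
  have pw: "(SUP n. ennreal (f x * indicator (Ln n) x)) = ennreal (f' x)" for x
  proof (rule antisym)
    show "(SUP n. ennreal (f x * indicator (Ln n) x)) \<le> ennreal (f' x)"
    proof (rule SUP_least)
      fix n show "ennreal (f x * indicator (Ln n) x) \<le> ennreal (f' x)"
        unfolding f'_def S_def by (cases "x \<in> Ln n") (auto simp: indicator_def)
    qed
    show "ennreal (f' x) \<le> (SUP n. ennreal (f x * indicator (Ln n) x))"
    proof (cases "x \<in> S")
      case True
      then obtain n where "x \<in> Ln n" unfolding S_def by blast
      then have "ennreal (f' x) = ennreal (f x * indicator (Ln n) x)"
        using True unfolding f'_def by simp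
      then show ?thesis by (metis SUP_upper UNIV_I)
    next
      case False
      then show ?thesis unfolding f'_def by simp
    qed
  qed
  have inc: "incseq (\<lambda>n x. ennreal (f x * indicator (Ln n) x))"
  proof (rule incseq_SucI, rule le_funI)
    fix n x
    show "ennreal (f x * indicator (Ln n) x) \<le> ennreal (f x * indicator (Ln (Suc n)) x)"
      using Ln_mono[of n "Suc n"] by (cases "x \<in> Ln n") (auto simp: indicator_def)
  qed
  have "(\<integral>\<^sup>+x. ennreal (f' x) \<partial>M) = (\<integral>\<^sup>+x. (SUP n. ennreal (f x * indicator (Ln n) x)) \<partial>M)"
    by (simp add: pw)
  also have "\<dots> = (SUP n. \<integral>\<^sup>+x. ennreal (f x * indicator (Ln n) x) \<partial>M)"
    by (rule nn_integral_monotone_convergence_SUP[OF inc]) (use Ln_meas in measurable)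
  also have "\<dots> \<le> ennreal s"
  proof (rule SUP_least)
    fix n
    have "(\<integral>\<^sup>+x. ennreal (f x * indicator (Ln n) x) \<partial>M) = ennreal (fint M f (Ln n))"
      unfolding fint_def
    proof (rule nn_integral_eq_integral)
      show "integrable M (\<lambda>x. f x * indicator (Ln n) x)" by (rule int_ind[OF Lf Ln_s Ln_f])
      show "AE x in M. 0 \<le> f x * indicator (Ln n) x"
        using ae_nonneg[OF nn fin_sf[OF Ln_s Ln_f]] by eventually_elim (auto simp: indicator_def)
    qed
    also have "\<dots> \<le> ennreal s" by (rule ennreal_leI) (rule le_s[OF Ln_c])
    finally show "(\<integral>\<^sup>+x. ennreal (f x * indicator (Ln n) x) \<partial>M) \<le> ennreal s" .
  qed
  finally have "(\<integral>\<^sup>+x. ennreal (f' x) \<partial>M) \<le> ennreal s" .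
  then have nnfin: "(\<integral>\<^sup>+x. ennreal (f' x) \<partial>M) < \<infinity>"
    using ennreal_less_top[of s] unfolding infinity_ennreal_def by (rule le_less_trans)
  have f'_int: "integrable M f'" by (rule integrableI_nonneg[OF f'_meas f'_nn nnfin])
  have lnull: "locally_null M {x. f' x \<noteq> f x}"
  proof -
    have eqset: "{x. f' x \<noteq> f x} = {x. x \<notin> S \<and> f x \<noteq> 0}" unfolding f'_def by (auto simp: indicator_def)
    have pre: "f -` (- {0}) \<inter> F \<in> sets M" if F: "sigma_finite_set M F" for F
    proof -
      have "locally_borel M (f -` (- {0}))"
        using Lf unfolding Linfty_def locally_borel_measurable_def by (simp add: borel_open)
      then show ?thesis using F unfolding locally_borel_def by blast
    qed
    have lb: "locally_borel M {x. f' x \<noteq> f x}"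
      unfolding locally_borel_def
    proof (intro allI impI)
      fix F assume F: "sigma_finite_set M F"
      have "{x. f' x \<noteq> f x} \<inter> F = (f -` (- {0}) \<inter> F) - S" unfolding eqset by blast
      then show "{x. f' x \<noteq> f x} \<inter> F \<in> sets M" using sets.Diff[OF pre[OF F] S_s] by simp
    qed
    have "emeasure M ({x. f' x \<noteq> f x} \<inter> F) = 0" if F: "sigma_finite_set M F" for F
    proof -
      have "\<exists>Fn::nat \<Rightarrow> 'a set. range Fn \<subseteq> sets M \<and> (\<forall>n. emeasure M (Fn n) < \<infinity>) \<and> F = (\<Union>n. Fn n)"
        using F unfolding sigma_finite_set_def by (rule conjunct2)
      then obtain Fn :: "nat \<Rightarrow> 'a set" where Fn: "range Fn \<subseteq> sets M" "\<And>n. emeasure M (Fn n) < \<infinity>" "F = (\<Union>n. Fn n)"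
        by blast
      define Bn where "Bn n = (f -` (- {0}) \<inter> F) \<inter> Fn n - S" for n
      have Fn_s: "Fn n \<in> sets M" for n using Fn(1) by blast
      have Bn_s: "Bn n \<in> sets M" for n unfolding Bn_def
        by (intro sets.Diff sets.Int pre[OF F] Fn_s S_s)
      have Bn_f: "emeasure M (Bn n) < \<infinity>" for n
      proof -
        have "emeasure M (Bn n) \<le> emeasure M (Fn n)" unfolding Bn_def by (rule emeasure_mono[OF _ Fn_s]) blast
        then show ?thesis using Fn(2)[of n] by (rule le_less_trans)
      qed
      have Bn0: "emeasure M (Bn n) = 0" for n
      proof (rule haar_null_from_compacts[OF H Bn_s Bn_f])
        fix K assume K: "compact K" "K \<subseteq> Bn n"
        have "K \<inter> S = {}" using K(2) unfolding Bn_def by auto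
        moreover have "K \<subseteq> {x. f x \<noteq> 0}" using K(2) unfolding Bn_def by auto
        ultimately show "emeasure M K = 0" by (rule nullK[OF K(1)])
      qed
      have "{x. f' x \<noteq> f x} \<inter> F = (\<Union>n. Bn n)" using Fn(3) by (auto simp: eqset Bn_def)
      moreover have "emeasure M (\<Union>n. Bn n) = 0"
        by (rule emeasure_UN_eq_0) (use Bn0 Bn_s in blast)+
      ultimately show ?thesis by simp
    qed
    then show ?thesis using lb unfolding locally_null_def by blast
  qed
  show ?thesis
  proof (intro exI[of _ S] conjI)
    show "sigma_finite_set M S" by (rule S_sf)
    show "locally_null M {x. f x * indicator S x \<noteq> f x}" using lnull unfolding f'_def .
    show "integrable M (\<lambda>x. f x * indicator S x)" using f'_int unfolding f'_def .
  qed
qed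

lemma part2:
  fixes M :: "'a::{topological_ab_group_add, t2_space} measure" and f :: "'a \<Rightarrow> real"
  assumes H: "haar_measure M" and fc: "continuous_on UNIV f"
    and S_sf: "sigma_finite_set M S" and ln: "locally_null M {x. f x * indicator S x \<noteq> f x}"
    and fi: "integrable M (\<lambda>x. f x * indicator S x)"
  shows "integrable M f"
proof -
  define f' where "f' x = f x * indicator S x" for x
  define N where "N = {x. f' x \<noteq> f x}"
  have spM: "space M = UNIV" using haar_space[OF H] .
  have ln': "locally_null M N" using ln unfolding N_def f'_def .
  have f'i: "integrable M f'" using fi unfolding f'_def .
  have f_meas: "f \<in> borel_measurable M"
    by (subst measurable_cong_sets[OF haar_sets[OF H] refl]) (rule borel_measurable_continuous_onI[OF fc])
  have aeK: "AE x in M. x \<in> K \<longrightarrow> f' x = f x" if K: "compact K" for K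
  proof -
    have "N \<inter> K \<in> null_sets M"
      using ln' fin_sf[OF haar_compact[OF H K] haar_compact_fin[OF H K]]
      unfolding locally_null_def locally_borel_def by auto
    then show ?thesis by (rule AE_I') (auto simp: N_def)
  qed
  define R where "R = (\<integral>x. \<bar>f' x\<bar> \<partial>M)"
  define On where "On n = {x. 1 / real (Suc n) < \<bar>f x\<bar>}" for n
  have On_open: "open (On n)" for n unfolding On_def
    by (rule open_Collect_less) (intro continuous_intros fc)+
  have Kb: "measure M K \<le> real (Suc n) * R" if K: "compact K" "K \<subseteq> On n" for K n
  proof -
    have Ks: "K \<in> sets M" using haar_compact[OF H K(1)] .
    have Kf: "emeasure M K < \<infinity>" using haar_compact_fin[OF H K(1)] .
    have i1: "integrable M (\<lambda>x. 1 / real (Suc n) * indicator K x)"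
      using Ks Kf by (intro integrable_mult_right integrable_real_indicator)
    have i2: "integrable M (\<lambda>x. \<bar>f' x\<bar> * indicator K x)"
      by (rule integrable_real_mult_indicator[OF Ks integrable_abs[OF f'i]])
    have "(\<integral>x. 1 / real (Suc n) * indicator K x \<partial>M) \<le> (\<integral>x. \<bar>f' x\<bar> * indicator K x \<partial>M)"
    proof (rule integral_mono_AE[OF i1 i2])
      show "AE x in M. 1 / real (Suc n) * indicator K x \<le> \<bar>f' x\<bar> * indicator K x"
        using aeK[OF K(1)]
      proof eventually_elim
        case (elim x)
        show ?case
        proof (cases "x \<in> K")
          case True
          then have "1 / real (Suc n) < \<bar>f x\<bar>" using K(2) unfolding On_def by auto
          then show ?thesis using True elim by simp
        qed simp
      qed
    qed
    also have "\<dots> \<le> R" unfolding R_def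
      by (rule integral_mono[OF i2 integrable_abs[OF f'i]]) (auto simp: indicator_def)
    finally have "measure M K / real (Suc n) \<le> R" using spM by simp
    then show ?thesis by (simp add: divide_le_eq mult.commute)
  qed
  have On_s: "On n \<in> sets M" for n using haar_open[OF H On_open] .
  have On_f: "emeasure M (On n) < \<infinity>" for n
  proof -
    have "emeasure M (On n) = (SUP K\<in>{K. compact K \<and> K \<subseteq> On n}. emeasure M K)"
      by (rule haar_inner[OF H On_open])
    also have "\<dots> \<le> ennreal (real (Suc n) * R)"
    proof (rule SUP_least)
      fix K assume "K \<in> {K. compact K \<and> K \<subseteq> On n}"
      then have K: "compact K" "K \<subseteq> On n" by auto
      have "emeasure M K = ennreal (measure M K)"
        by (rule emeasure_eq_ennreal_measure) (use haar_compact_fin[OF H K(1)] in simp)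
      also have "\<dots> \<le> ennreal (real (Suc n) * R)" by (rule ennreal_leI[OF Kb[OF K]])
      finally show "emeasure M K \<le> ennreal (real (Suc n) * R)" .
    qed
    finally show ?thesis unfolding infinity_ennreal_def by (rule le_less_trans) simp
  qed
  define Ob where "Ob = (\<Union>n. On n)"
  have Ob_sf: "sigma_finite_set M Ob"
    unfolding sigma_finite_set_def
  proof (intro conjI exI[of _ On])
    show "Ob \<in> sets M" unfolding Ob_def using On_s by blast
    show "range On \<subseteq> sets M" using On_s by blast
    show "\<forall>n. emeasure M (On n) < \<infinity>" using On_f by blast
    show "Ob = (\<Union>n. On n)" by (rule Ob_def)
  qed
  have NOb: "N \<subseteq> Ob"
  proof
    fix x assume "x \<in> N"
    then have "f x \<noteq> 0" unfolding N_def f'_def by (auto simp: indicator_def split: if_splits)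
    then have "0 < \<bar>f x\<bar>" by simp
    then obtain n where "inverse (real (Suc n)) < \<bar>f x\<bar>" using reals_Archimedean by blast
    then show "x \<in> Ob" unfolding Ob_def On_def by (auto simp: inverse_eq_divide)
  qed
  have "N \<inter> Ob \<in> null_sets M"
    using ln' Ob_sf unfolding locally_null_def locally_borel_def by auto
  then have "AE x in M. f' x = f x" by (rule AE_I') (use NOb in \<open>auto simp: N_def\<close>)
  then have "integrable M f' = integrable M f"
    by (rule integrable_cong_AE[OF borel_measurable_integrable[OF f'i] f_meas])
  then show ?thesis using f'i by simp
qed

theorem proposition5p2:
  fixes M :: "'a::{topological_ab_group_add, t2_space} measure"
    and f :: "'a \<Rightarrow> real"
  assumes "lca_group TYPE('a)"
    and "haar_measure M"
    and "Linfty M f"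
    and "locally_null M {x. f x < 0}"
    and "\<And>g. integrable M g \<Longrightarrow> (AE x in M. 0 \<le> g x) \<Longrightarrow> integrable M (conv M f g)"
  shows "(\<exists>f'. locally_null M {x. f' x \<noteq> f x} \<and> integrable M f')
    \<and> (bounded (range f) \<and> continuous_on UNIV f \<longrightarrow> integrable M f)"
proof -
  obtain S where S: "sigma_finite_set M S" "locally_null M {x. f x * indicator S x \<noteq> f x}"
      "integrable M (\<lambda>x. f x * indicator S x)"
    using part1[OF assms] by blast
  show ?thesis
  proof (intro conjI impI)
    show "\<exists>f'. locally_null M {x. f' x \<noteq> f x} \<and> integrable M f'"
      by (rule exI[of _ "\<lambda>x. f x * indicator S x"], rule conjI[OF S(2) S(3)])
    assume "bounded (range f) \<and> continuous_on UNIV f"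
    then show "integrable M f" using part2[OF assms(2) _ S] by blast
  qed
qed

end
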